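(* If $G=(V,E)$ is a word-representable graph with representation number $k>3$, then $G$ is not $3$-complete square-free uniform word-representable.
   Context: A graph $G=(V,E)$ is word-representable if there is a word $w$ over $V$, containing every letter of $V$, such that distinct $x,y\in V$ alternate in $w$ (deleting all other letters yields $xyxy\cdots$ or $yxyx\cdots$) iff $xy\in E$; $w$ represents $G$. A word is $k$-uniform if every letter occurs exactly $k$ times, and uniform if it is $k$-uniform for some $k$. The representation number of a word-representable graph is the least $k$ such that it is represented by a $k$-uniform word. For a word $w$ over $\Sigma$ and $S\subseteq\Sigma$, $w_S$ denotes the word obtained from $w$ by deleting all letters not in $S$. For an integer $p\ge1$, $w$ contains a $p$-complete square if there exists $S\subseteq\Sigma$ such that $w_S$ contains a factor $XX$ with $X\in S^+$ and $|X|\ge p$; otherwise $w$ is $p$-complete square-free. A graph $G$ is $p$-complete square-free uniform word-representable if it is represented by a uniform word $w$ that is $p$-complete square-free. *)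

theory Defs
  imports Main
begin

definition simple_graph :: "'a set \<Rightarrow> 'a set set \<Rightarrow> bool" where
  "simple_graph V E \<longleftrightarrow> finite V \<and>
     (\<forall>e\<in>E. \<exists>x y. e = {x, y} \<and> x \<noteq> y \<and> x \<in> V \<and> y \<in> V)"

definition restrict_word :: "'a list \<Rightarrow> 'a set \<Rightarrow> 'a list" where
  "restrict_word w S = filter (\<lambda>c. c \<in> S) w"

definition alternate :: "'a list \<Rightarrow> 'a \<Rightarrow> 'a \<Rightarrow> bool" where
  "alternate w x y \<longleftrightarrow>
     (let u = restrict_word w {x, y} in \<forall>i. Suc i < length u \<longrightarrow> u ! i \<noteq> u ! Suc i)"

definition represents :: "'a list \<Rightarrow> 'a set \<Rightarrow> 'a set set \<Rightarrow> bool" where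
  "represents w V E \<longleftrightarrow> set w = V \<and>
     (\<forall>x\<in>V. \<forall>y\<in>V. x \<noteq> y \<longrightarrow> (alternate w x y \<longleftrightarrow> {x, y} \<in> E))"

definition word_representable :: "'a set \<Rightarrow> 'a set set \<Rightarrow> bool" where
  "word_representable V E \<longleftrightarrow> (\<exists>w. represents w V E)"

definition k_uniform :: "nat \<Rightarrow> 'a list \<Rightarrow> bool" where
  "k_uniform k w \<longleftrightarrow> (\<forall>a\<in>set w. count_list w a = k)"

definition uniform :: "'a list \<Rightarrow> bool" where
  "uniform w \<longleftrightarrow> (\<exists>k. k_uniform k w)"

definition representation_number :: "'a set \<Rightarrow> 'a set set \<Rightarrow> nat" where
  "representation_number V E = (LEAST k. \<exists>w. k_uniform k w \<and> represents w V E)"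

definition contains_complete_square :: "nat \<Rightarrow> 'a list \<Rightarrow> bool" where
  "contains_complete_square p w \<longleftrightarrow>
     (\<exists>S u X v. restrict_word w S = u @ X @ X @ v \<and> X \<noteq> [] \<and> set X \<subseteq> S \<and> p \<le> length X)"

definition complete_square_free :: "nat \<Rightarrow> 'a list \<Rightarrow> bool" where
  "complete_square_free p w \<longleftrightarrow> \<not> contains_complete_square p w"

definition csf_uniform_word_representable :: "nat \<Rightarrow> 'a set \<Rightarrow> 'a set set \<Rightarrow> bool" where
  "csf_uniform_word_representable p V E \<longleftrightarrow>
     (\<exists>w. uniform w \<and> represents w V E \<and> complete_square_free p w)"

end

theory Submission
  imports Defs
begin

lemma count_distinct: "distinct xs \<Longrightarrow> a \<in> set xs \<Longrightarrow> count_list xs a = 1"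
  by (induction xs) auto

lemma len_filter2: "x \<noteq> y \<Longrightarrow>
  length (filter (\<lambda>c. c \<in> {x, y}) w) = count_list w x + count_list w y"
  by (induction w) auto

lemma alt_step:
  assumes "\<forall>i. Suc i < length u \<longrightarrow> u ! i \<noteq> u ! Suc i"
    and "set u \<subseteq> {x, y}" and "i + 2 < length u"
  shows "u ! (i + 2) = u ! i"
proof -
  have "u ! i \<in> {x,y}" "u ! Suc i \<in> {x,y}" "u ! Suc (Suc i) \<in> {x,y}"
  proof -
    have "i < length u" "Suc i < length u" "Suc (Suc i) < length u" using assms(3) by auto
    then show "u ! i \<in> {x,y}" "u ! Suc i \<in> {x,y}" "u ! Suc (Suc i) \<in> {x,y}"
      using assms(2) nth_mem by blast+
  qed
  moreover have "u ! i \<noteq> u ! Suc i" "u ! Suc i \<noteq> u ! Suc (Suc i)"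
    using assms(1,3) by auto
  ultimately show ?thesis by (auto simp: numeral_2_eq_2)
qed

lemma alt_square:
  assumes "\<forall>i. Suc i < length u \<longrightarrow> u ! i \<noteq> u ! Suc i"
    and "set u \<subseteq> {x, y}" and "8 \<le> length u"
  shows "u = take 4 u @ take 4 u @ drop 8 u"
proof -
  have p: "u ! (i + 4) = u ! i" if "i < 4" for i
  proof -
    have "u ! (i + 4) = u ! ((i + 2) + 2)" by (simp add: eval_nat_numeral)
    also have "\<dots> = u ! (i + 2)" using alt_step[OF assms(1,2), of "i+2"] that assms(3) by simp
    also have "\<dots> = u ! i" using alt_step[OF assms(1,2), of i] that assms(3) by simp
    finally show ?thesis .
  qed
  have "take 4 (drop 4 u) = take 4 u"
    by (rule nth_equalityI) (use assms(3) p in \<open>auto simp: add.commute\<close>)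
  moreover have "u = take 4 u @ take 4 (drop 4 u) @ drop 8 u"
  proof -
    have "u = take 4 u @ drop 4 u" by simp
    also have "drop 4 u = take 4 (drop 4 u) @ drop 4 (drop 4 u)" by (rule append_take_drop_id[symmetric])
    finally show ?thesis by simp
  qed
  ultimately show ?thesis by simp
qed

lemma edgeless_rep:
  assumes "finite V"
  shows "\<exists>w. k_uniform 2 w \<and> represents w V {}"
proof -
  obtain xs where xs: "set xs = V" "distinct xs"
    using assms finite_distinct_list by blast
  define w where "w = xs @ rev xs"
  have "k_uniform 2 w"
    unfolding k_uniform_def w_def using xs count_distinct[OF xs(2)] by (auto simp: count_list_rev)
  moreover have "\<not> alternate w x y" if "x \<in> V" "y \<in> V" "x \<noteq> y" for x y
  proof -
    let ?f = "filter (\<lambda>c. c \<in> {x, y}) xs"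
    have d: "distinct ?f" using xs by simp
    have s: "set ?f = {x, y}" using xs that by auto
    have "length ?f = 2" using distinct_card[OF d] s that by simp
    then obtain a b where ab: "?f = [a, b]"
      by (metis (no_types, lifting) One_nat_def Suc_1 length_0_conv length_Suc_conv)
    have "restrict_word w {x, y} = [a, b, b, a]"
      unfolding restrict_word_def w_def using ab by (simp add: rev_filter[symmetric])
    then show ?thesis unfolding alternate_def Let_def
      by (metis One_nat_def Suc_1 lessI nth_Cons_0 nth_Cons_Suc length_Cons list.size(3) numeral_2_eq_2 numeral_3_eq_3 numeral_Bit0 numeral_One Suc_less_eq zero_less_Suc less_Suc_eq)
  qed
  ultimately show ?thesis unfolding represents_def w_def using xs by auto
qed

theorem mainTheorem14:
  fixes V :: "'a set" and E :: "'a set set" and k :: nat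
  assumes "simple_graph V E"
    and "word_representable V E"
    and "representation_number V E = k"
    and "k > 3"
  shows "\<not> csf_uniform_word_representable 3 V E"
proof
  assume "csf_uniform_word_representable 3 V E"
  then obtain w m where w: "k_uniform m w" "represents w V E" "complete_square_free 3 w"
    unfolding csf_uniform_word_representable_def uniform_def by blast
  have lest: "representation_number V E \<le> j" if "k_uniform j w'" "represents w' V E" for j w'
    unfolding representation_number_def by (rule Least_le) (use that in blast)
  have nosq: "\<not> (restrict_word w S = u @ X @ X @ v \<and> X \<noteq> [] \<and> set X \<subseteq> S \<and> 3 \<le> length X)"
    for S u X v using w(3) unfolding complete_square_free_def contains_complete_square_def by blast
  show False
  proof (cases "w = []")
    case True
    then have "k_uniform 0 w" by (simp add: k_uniform_def)
    then show False using lest[OF _ w(2), of 0] assms by simp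
  next
    case False
    then obtain a where a: "a \<in> set w" by (cases w) auto
    have cm: "count_list w a = m" using w(1) a by (simp add: k_uniform_def)
    have m3: "m \<le> 3 \<or> m = 4 \<or> m = 5 \<or> m \<ge> 6" by auto
    moreover have "\<not> m \<ge> 6"
    proof
      assume "m \<ge> 6"
      have "restrict_word w {a} = replicate m a"
        unfolding restrict_word_def using cm
        by (metis (mono_tags, lifting) count_list_eq_length_filter filter_cong
             filter_id_conv[of "\<lambda>c. c = a"] singleton_iff replicate_length_same[of "filter (\<lambda>c. c = a) w" a]
             mem_Collect_eq set_filter eq_commute)
      also have "\<dots> = [] @ replicate 3 a @ replicate 3 a @ replicate (m - 6) a"
        using \<open>m \<ge> 6\<close> by (simp add: replicate_add[symmetric])
      finally show False using nosq[of "{a}" "[]" "replicate 3 a" "replicate (m-6) a"] by simp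
    qed
    moreover have "\<not> m \<le> 3" using lest[OF w(1,2)] assms by simp
    moreover have "\<not> (m = 4 \<or> m = 5)"
    proof
      assume m45: "m = 4 \<or> m = 5"
      have "E = {}"
      proof (rule ccontr)
        assume "E \<noteq> {}"
        then obtain e where "e \<in> E" by blast
        then obtain x y where xy: "e = {x,y}" "x \<noteq> y" "x \<in> V" "y \<in> V"
          using assms(1) unfolding simple_graph_def by blast
        have alt: "alternate w x y" using w(2) xy \<open>e \<in> E\<close> unfolding represents_def by blast
        let ?u = "restrict_word w {x, y}"
        have sx: "x \<in> set w" "y \<in> set w" using w(2) xy unfolding represents_def by auto
        have "length ?u = 2 * m" unfolding restrict_word_def
          using len_filter2[OF xy(2), of w] w(1) sx by (simp add: k_uniform_def)
        then have l8: "8 \<le> length ?u" using m45 by auto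
        have su: "set ?u \<subseteq> {x, y}" unfolding restrict_word_def by auto
        have "?u = take 4 ?u @ take 4 ?u @ drop 8 ?u"
          by (rule alt_square[OF _ su l8]) (use alt in \<open>simp add: alternate_def Let_def\<close>)
        moreover have "set (take 4 ?u) \<subseteq> {x, y}" using su set_take_subset by fastforce
        moreover have "length (take 4 ?u) = 4" using l8 by simp
        ultimately show False using nosq[of "{x,y}" "[]" "take 4 ?u" "drop 8 ?u"] by fastforce
      qed
      moreover have "finite V" using assms(1) simple_graph_def by blast
      ultimately obtain w' where "k_uniform 2 w'" "represents w' V E" using edgeless_rep by blast
      then show False using lest assms by fastforce
    qed
    ultimately show False by blast
  qed
qed

end
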